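(* Let $\mathcal{A}$ be a cubical $k$-way tensor of dimension $n$ that is general symmetric with respect to a permutation matrix $P$, i.e. $P\,\mathrm{vec}(\mathcal{A})=\mathrm{vec}(\mathcal{A})$ where $P$ corresponds with a general symmetry. Fix a degree $d$ and cubical factor dimensions: $n^{(i)}_1=\cdots=n^{(i)}_k=m_i$ with $\prod_{i=1}^d m_i=n$, and let $P_1,\dots,P_d$ be permutation matrices with $P=Q^T(P_d\otimes\cdots\otimes P_1)Q$. Suppose $\tilde{\mathcal{A}}=\sum_{j=1}^R\sigma_j\,a^{(1)}_j\circ\cdots\circ a^{(d)}_j$ is a polyadic decomposition with $\|a^{(i)}_j\|_2=1$ for all $i,j$ and with mutually orthogonal rank-1 terms, and let $\mathcal{A}^{(i)}_j$ be the $m_i\times\cdots\times m_i$ ($k$-way) tensor with $\mathrm{vec}(\mathcal{A}^{(i)}_j)=a^{(i)}_j$, so that $\mathcal{A}=\sum_{j=1}^R\sigma_j\,\mathcal{A}^{(d)}_j\otimes\cdots\otimes\mathcal{A}^{(1)}_j$. Assume Condition 1: the $\sigma_j$ are pairwise distinct and, for every $l\in\{1,\dots,R\}$ and every $j\neq l$, $\sigma_j\prod_{i=1}^d (a^{(i)}_l)^TP_i\,a^{(i)}_j=0$. Then each factor $\mathcal{A}^{(i)}_j$ is either general symmetric or general skew-symmetric, i.e. $P_i\,\mathrm{vec}(\mathcal{A}^{(i)}_j)=\pm\mathrm{vec}(\mathcal{A}^{(i)}_j)$, and in each term $j$ the number of indices $i$ for which $\mathcal{A}^{(i)}_j$ is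 general skew-symmetric is either zero or even.
   Context: Grouped index convention: $[j_1\cdots j_m]$ denotes the linear index with the first index varying fastest, and $\mathrm{vec}(\mathcal{B})_{[j_1\cdots j_k]}=\mathcal{B}_{j_1\cdots j_k}$. The outer product $a^{(1)}\circ\cdots\circ a^{(d)}$ has entries $a^{(1)}_{l_1}\cdots a^{(d)}_{l_d}$; two tensors are orthogonal if the sum of entrywise products is zero. Tensor Kronecker product of $k$-way tensors: $(\mathcal{B}\otimes\mathcal{C})_{[i_1i_{k+1}]\cdots[i_ki_{2k}]}=\mathcal{B}_{i_{k+1}\cdots i_{2k}}\mathcal{C}_{i_1\cdots i_k}$. Given degree $d$ and dimensions $n^{(i)}_r$ with $\prod_i n^{(i)}_r=n$, the permuted tensor $\tilde{\mathcal{A}}$ has entries $\tilde{\mathcal{A}}_{[i^{(1)}_1\cdots i^{(1)}_k]\cdots[i^{(d)}_1\cdots i^{(d)}_k]}=\mathcal{A}_{[i^{(1)}_1\cdots i^{(d)}_1]\cdots[i^{(1)}_k\cdots i^{(d)}_k]}$, and $Q$ is the permutation matrix with $Q\,\mathrm{vec}(\mathcal{A})=\mathrm{vec}(\tilde{\mathcal{A}})$. A permutation matrix $P$ of size $n^k$ corresponds with a general symmetry if for every degree $d$ and every such choice of dimensions there are permutation matrices $P_1,\dots,P_d$, $P_i$ of size $\prod_r n^{(i)}_r$, with $P=Q^T(P_d\otimes\cdots\otimes P_1)Q$ (matrix Kronecker product). A factor $\mathcal{A}^{(i)}_j$ is called general symmetric (resp. general skew-symmetric) here if $P_i\,\mathrm{vec}(\mathcal{A}^{(i)}_j)=\mathrm{vec}(\mathcal{A}^{(i)}_j)$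 (resp. $=-\mathrm{vec}(\mathcal{A}^{(i)}_j)$). *)

theory Defs
  imports Complex_Main "HOL-Library.FuncSet"
begin

text \<open>All indices are 0-based. Real matrices of size N are
functions nat => nat => real (only entries with both indices < N matter),
real vectors of length N are functions nat => real (only entries < N matter).
Grouped (linear) indices use mixed radix with the first index varying fastest.\<close>

type_synonym rmat = "nat \<Rightarrow> nat \<Rightarrow> real"
type_synonym rvec = "nat \<Rightarrow> real"

definition lin :: "(nat \<Rightarrow> nat) \<Rightarrow> (nat \<Rightarrow> nat) \<Rightarrow> nat \<Rightarrow> nat" where
  "lin rad dig len = (\<Sum>t<len. dig t * (\<Prod>u<t. rad u))"

definition mat_vec :: "nat \<Rightarrow> rmat \<Rightarrow> rvec \<Rightarrow> rvec" where
  "mat_vec N M x = (\<lambda>i. \<Sum>j<N. M i j * x j)"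

definition mat_mul :: "nat \<Rightarrow> rmat \<Rightarrow> rmat \<Rightarrow> rmat" where
  "mat_mul N A B = (\<lambda>i j. \<Sum>l<N. A i l * B l j)"

definition mat_transpose :: "rmat \<Rightarrow> rmat" where
  "mat_transpose A = (\<lambda>i j. A j i)"

definition mat_eq :: "nat \<Rightarrow> rmat \<Rightarrow> rmat \<Rightarrow> bool" where
  "mat_eq N A B \<longleftrightarrow> (\<forall>i<N. \<forall>j<N. A i j = B i j)"

definition vec_eq :: "nat \<Rightarrow> rvec \<Rightarrow> rvec \<Rightarrow> bool" where
  "vec_eq N x y \<longleftrightarrow> (\<forall>i<N. x i = y i)"

definition inner_vec :: "nat \<Rightarrow> rvec \<Rightarrow> rvec \<Rightarrow> real" where
  "inner_vec N x y = (\<Sum>i<N. x i * y i)"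

definition perm_mat :: "nat \<Rightarrow> rmat \<Rightarrow> bool" where
  "perm_mat N M \<longleftrightarrow>
     (\<forall>i<N. \<forall>j<N. M i j = 0 \<or> M i j = 1) \<and>
     (\<forall>i<N. \<exists>!j. j < N \<and> M i j = 1) \<and>
     (\<forall>j<N. \<exists>!i. i < N \<and> M i j = 1)"

definition kron :: "rmat \<Rightarrow> nat \<Rightarrow> rmat \<Rightarrow> rmat" where
  "kron B sC C = (\<lambda>i j. B (i div sC) (j div sC) * C (i mod sC) (j mod sC))"

text \<open>kron_list M Ps d = P_d \<otimes> ... \<otimes> P_1, where P_(i+1) = Ps i has size M i.\<close>
fun kron_list :: "(nat \<Rightarrow> nat) \<Rightarrow> (nat \<Rightarrow> rmat) \<Rightarrow> nat \<Rightarrow> rmat" where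
  "kron_list M Ps 0 = (\<lambda>i j. if i = 0 \<and> j = 0 then 1 else 0)"
| "kron_list M Ps (Suc d) = kron (Ps d) (\<Prod>i<d. M i) (kron_list M Ps d)"

text \<open>The permutation matrix Q for k-way tensors, degree d and dimensions
N i r = n^(i+1)_(r+1) (i < d, r < k):  Q vec(A) = vec(A~), i.e. Q has a 1 at
(s,t) iff s is the linear index of an entry of A~ and t the linear index of the
corresponding entry of A.\<close>
definition Qmat :: "nat \<Rightarrow> nat \<Rightarrow> (nat \<Rightarrow> nat \<Rightarrow> nat) \<Rightarrow> rmat" where
  "Qmat k d N = (\<lambda>s t.
     if (\<exists>x :: nat \<Rightarrow> nat \<Rightarrow> nat. (\<forall>i<d. \<forall>r<k. x i r < N i r) \<and>
            s = lin (\<lambda>i. \<Prod>r<k. N i r) (\<lambda>i. lin (N i) (x i) k) d \<and>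
            t = lin (\<lambda>r. \<Prod>i<d. N i r) (\<lambda>r. lin (\<lambda>i. N i r) (\<lambda>i. x i r) d) k)
     then 1 else 0)"

definition general_symmetry :: "nat \<Rightarrow> nat \<Rightarrow> rmat \<Rightarrow> bool" where
  "general_symmetry k n P \<longleftrightarrow>
     (\<forall>(d::nat) (N :: nat \<Rightarrow> nat \<Rightarrow> nat). (\<forall>r<k. (\<Prod>i<d. N i r) = n) \<longrightarrow>
       (\<exists>Ps :: nat \<Rightarrow> rmat. (\<forall>i<d. perm_mat (\<Prod>r<k. N i r) (Ps i)) \<and>
          mat_eq (n ^ k) P
            (mat_mul (n ^ k) (mat_transpose (Qmat k d N))
               (mat_mul (n ^ k) (kron_list (\<lambda>i. \<Prod>r<k. N i r) Ps d) (Qmat k d N)))))"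

end

theory Submission
  imports Defs
begin



lemma lin_Suc: "lin rad dig (Suc len) = lin rad dig len + dig len * (\<Prod>u<len. rad u)"
  by (simp add: lin_def)

lemma lin_cong: "(\<And>t. t < len \<Longrightarrow> d1 t = d2 t) \<Longrightarrow> lin rad d1 len = lin rad d2 len"
  unfolding lin_def by (intro sum.cong) auto

lemma lin_bound: "\<forall>t<len. dig t < rad t \<Longrightarrow> lin rad dig len < (\<Prod>u<len. rad u)"
proof (induction len)
  case 0 then show ?case by (simp add: lin_def)
next
  case (Suc len)
  define P where "P = (\<Prod>u<len. rad u)"
  have a: "lin rad dig len < P" using Suc by (simp add: P_def)
  have b: "dig len + 1 \<le> rad len" using Suc.prems by (simp add: Suc_le_eq)
  have "lin rad dig (Suc len) = lin rad dig len + dig len * P" by (simp add: lin_Suc P_def)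
  also have "\<dots> < P + dig len * P" using a by simp
  also have "\<dots> = (dig len + 1) * P" by simp
  also have "\<dots> \<le> rad len * P" using b by (intro mult_right_mono) auto
  finally show ?case by (simp add: P_def mult.commute)
qed

lemma lin_inj: "\<forall>t<len. d1 t < rad t \<Longrightarrow> \<forall>t<len. d2 t < rad t \<Longrightarrow>
   lin rad d1 len = lin rad d2 len \<Longrightarrow> \<forall>t<len. d1 t = d2 t"
proof (induction len)
  case 0 then show ?case by simp
next
  case (Suc len)
  define P where "P = (\<Prod>u<len. rad u)"
  have a1: "lin rad d1 len < P" using Suc.prems by (intro lin_bound[of len d1 rad, folded P_def]) auto
  have a2: "lin rad d2 len < P" using Suc.prems by (intro lin_bound[of len d2 rad, folded P_def]) auto
  have e: "lin rad d1 len + d1 len * P = lin rad d2 len + d2 len * P"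
    using Suc.prems(3) by (simp add: lin_Suc P_def)
  have P0: "P > 0" using a1 by simp
  have "(lin rad d1 len + d1 len * P) mod P = (lin rad d2 len + d2 len * P) mod P" using e by simp
  hence e1: "lin rad d1 len = lin rad d2 len" using a1 a2 by simp
  have "(lin rad d1 len + d1 len * P) div P = (lin rad d2 len + d2 len * P) div P" using e by simp
  hence e2: "d1 len = d2 len" using a1 a2 P0 by simp
  have "\<forall>t<len. d1 t = d2 t" using Suc e1 by auto
  then show ?case using e2 less_Suc_eq by auto
qed

lemma lin_surj: "y < (\<Prod>u<len. rad u) \<Longrightarrow> \<exists>dig. (\<forall>t<len. dig t < rad t) \<and> lin rad dig len = y"
proof (induction len arbitrary: y)
  case 0 then show ?case by (simp add: lin_def)
next
  case (Suc len)
  define P where "P = (\<Prod>u<len. rad u)"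
  have y: "y < P * rad len" using Suc.prems by (simp add: P_def)
  then have P0: "P > 0" by (cases "P = 0") auto
  have "y mod P < P" using P0 by simp
  then obtain d0 where d0: "\<forall>t<len. d0 t < rad t" "lin rad d0 len = y mod P"
    using Suc.IH[of "y mod P"] by (auto simp: P_def)
  define dig where "dig = d0(len := y div P)"
  have "y div P < rad len" using y by (simp add: less_mult_imp_div_less mult.commute)
  then have "\<forall>t<Suc len. dig t < rad t" using d0 by (auto simp: dig_def less_Suc_eq)
  moreover have "lin rad dig len = lin rad d0 len" by (intro lin_cong) (auto simp: dig_def)
  then have "lin rad dig (Suc len) = y" using d0 by (simp add: lin_Suc P_def[symmetric] dig_def)
  ultimately show ?case by blast
qed

lemma kron_list_lin:
  assumes "\<forall>i<d. l i < M i" "\<forall>i<d. l' i < M i"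
  shows "kron_list M Ps d (lin M l d) (lin M l' d) = (\<Prod>i<d. Ps i (l i) (l' i))"
  using assms
proof (induction d)
  case 0 then show ?case by (simp add: lin_def)
next
  case (Suc d)
  define P where "P = (\<Prod>u<d. M u)"
  have a1: "lin M l d < P" using Suc.prems by (intro lin_bound[of d l M, folded P_def]) auto
  have a2: "lin M l' d < P" using Suc.prems by (intro lin_bound[of d l' M, folded P_def]) auto
  have P0: "P > 0" using a1 by simp
  show ?case using a1 a2 P0 Suc
    by (simp add: lin_Suc P_def[symmetric] kron_def)
qed

lemma perm_mat_fun:
  assumes "perm_mat M Pm"
  shows "\<exists>\<pi>. bij_betw \<pi> {..<M} {..<M} \<and> (\<forall>s<M. \<forall>t<M. Pm s t = (if t = \<pi> s then 1 else 0))"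
proof -
  have RCZ: "(\<forall>i<M. \<forall>j<M. Pm i j = 0 \<or> Pm i j = 1) \<and> (\<forall>i<M. \<exists>!j. j<M \<and> Pm i j = 1) \<and> (\<forall>j<M. \<exists>!i. i < M \<and> Pm i j = 1)"
    using assms unfolding perm_mat_def .
  have row: "\<exists>!t. t < M \<and> Pm s t = 1" if "s < M" for s by (rule RCZ[THEN conjunct2, THEN conjunct1, rule_format, OF that])
  have col: "\<exists>!s. s < M \<and> Pm s t = 1" if "t < M" for t by (rule RCZ[THEN conjunct2, THEN conjunct2, rule_format, OF that])
  have z: "Pm s t = 0 \<or> Pm s t = 1" if "s < M" "t < M" for s t by (rule RCZ[THEN conjunct1, rule_format, OF that])
  define \<pi> where "\<pi> s = (THE t. t < M \<and> Pm s t = 1)" for s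
  have p1: "\<pi> s < M \<and> Pm s (\<pi> s) = 1" if "s < M" for s
    unfolding \<pi>_def by (rule theI'[OF row[OF that]])
  have u: "t = \<pi> s" if "s < M" "t < M" "Pm s t = 1" for s t
  proof -
    have "(THE t. t < M \<and> Pm s t = 1) = t" by (rule the1_equality[OF row[OF that(1)]]) (simp add: that(2,3))
    then show ?thesis unfolding \<pi>_def by simp
  qed
  have p2: "Pm s t = (if t = \<pi> s then 1 else 0)" if "s < M" "t < M" for s t
  proof (cases "t = \<pi> s")
    case True then show ?thesis using p1[OF that(1)] by simp
  next
    case False then have "Pm s t \<noteq> 1" using u[OF that] by blast
    then show ?thesis using z[OF that] False by simp
  qed
  have inj: "inj_on \<pi> {..<M}"
  proof
    fix s s' assume a: "s \<in> {..<M}" "s' \<in> {..<M}" "\<pi> s = \<pi> s'"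
    have b: "\<pi> s < M" "Pm s (\<pi> s) = 1" "Pm s' (\<pi> s) = 1" using p1[of s] p1[of s'] a by simp_all
    have "(THE i. i < M \<and> Pm i (\<pi> s) = 1) = s" by (rule the1_equality[OF col[OF b(1)]]) (use a b in simp)
    moreover have "(THE i. i < M \<and> Pm i (\<pi> s) = 1) = s'" by (rule the1_equality[OF col[OF b(1)]]) (use a b in simp)
    ultimately show "s = s'" by simp
  qed
  have "\<pi> ` {..<M} \<subseteq> {..<M}" using p1 by auto
  then have "\<pi> ` {..<M} = {..<M}" using endo_inj_surj[OF _ _ inj] by simp
  then have "bij_betw \<pi> {..<M} {..<M}" using inj unfolding bij_betw_def by simp
  then show ?thesis using p2 by blast
qed

lemma perm_norm:
  assumes "perm_mat M Pm"
  shows "(\<Sum>s<M. (mat_vec M Pm a s)^2) = (\<Sum>s<M. (a s)^2)"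
proof -
  obtain \<pi> where b: "bij_betw \<pi> {..<M} {..<M}" and p: "\<forall>s<M. \<forall>t<M. Pm s t = (if t = \<pi> s then 1 else 0)"
    using perm_mat_fun[OF assms] by blast
  have "mat_vec M Pm a s = a (\<pi> s)" if "s < M" for s
  proof -
    have "mat_vec M Pm a s = (\<Sum>t<M. if t = \<pi> s then a t else 0)"
      unfolding mat_vec_def using p that by (intro sum.cong) auto
    also have "\<dots> = a (\<pi> s)" proof -
      have "\<pi> s < M" using b that by (auto simp: bij_betw_def)
      then show ?thesis by simp
    qed
    finally show ?thesis .
  qed
  then have "(\<Sum>s<M. (mat_vec M Pm a s)^2) = (\<Sum>s<M. (a (\<pi> s))^2)" by simp
  also have "\<dots> = (\<Sum>s<M. (a s)^2)" using sum.reindex_bij_betw[OF b, of "\<lambda>t. (a t)^2"] by simp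
  finally show ?thesis .
qed

lemma unit_perm:
  assumes "perm_mat M Pm" "inner_vec M a a = 1"
  shows "\<bar>inner_vec M a (mat_vec M Pm a)\<bar> \<le> 1"
    and "inner_vec M a (mat_vec M Pm a) = 1 \<Longrightarrow> vec_eq M (mat_vec M Pm a) a"
    and "inner_vec M a (mat_vec M Pm a) = -1 \<Longrightarrow> vec_eq M (mat_vec M Pm a) (\<lambda>s. - a s)"
    and "vec_eq M (mat_vec M Pm a) (\<lambda>s. - a s) \<Longrightarrow> inner_vec M a (mat_vec M Pm a) = -1"
proof -
  define b where "b = mat_vec M Pm a"
  define c where "c = inner_vec M a b"
  have na: "(\<Sum>s<M. (a s)^2) = 1" using assms(2) by (simp add: inner_vec_def power2_eq_square)
  have nb: "(\<Sum>s<M. (b s)^2) = 1" using perm_norm[OF assms(1)] na by (simp add: b_def)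
  have cd: "c = (\<Sum>s<M. a s * b s)" by (simp add: c_def inner_vec_def)
  have dm: "(\<Sum>s<M. (a s - b s)^2) = 2 - 2 * c"
  proof -
    have "(\<Sum>s<M. (a s - b s)^2) = (\<Sum>s<M. (a s)^2 + (b s)^2 - 2 * (a s * b s))"
      by (intro sum.cong) (auto simp: power2_diff)
    also have "\<dots> = (\<Sum>s<M. (a s)^2) + (\<Sum>s<M. (b s)^2) - 2 * (\<Sum>s<M. a s * b s)"
      by (simp add: sum.distrib sum_subtractf sum_distrib_left)
    finally show ?thesis using na nb cd by simp
  qed
  have dp: "(\<Sum>s<M. (a s + b s)^2) = 2 + 2 * c"
  proof -
    have "(\<Sum>s<M. (a s + b s)^2) = (\<Sum>s<M. (a s)^2 + (b s)^2 + 2 * (a s * b s))"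
      by (intro sum.cong) (auto simp: power2_sum)
    also have "\<dots> = (\<Sum>s<M. (a s)^2) + (\<Sum>s<M. (b s)^2) + 2 * (\<Sum>s<M. a s * b s)"
      by (simp add: sum.distrib sum_distrib_left)
    finally show ?thesis using na nb cd by simp
  qed
  have "0 \<le> (\<Sum>s<M. (a s - b s)^2)" by (intro sum_nonneg) simp
  moreover have "0 \<le> (\<Sum>s<M. (a s + b s)^2)" by (intro sum_nonneg) simp
  ultimately show "\<bar>inner_vec M a (mat_vec M Pm a)\<bar> \<le> 1" using dm dp by (simp add: c_def b_def)
  show "vec_eq M (mat_vec M Pm a) a" if "inner_vec M a (mat_vec M Pm a) = 1"
  proof -
    have "(\<Sum>s<M. (a s - b s)^2) = 0" using dm that by (simp add: c_def b_def)
    then have "\<forall>s\<in>{..<M}. (a s - b s)^2 = 0" by (subst (asm) sum_nonneg_eq_0_iff) auto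
    then show ?thesis by (simp add: vec_eq_def b_def)
  qed
  show "vec_eq M (mat_vec M Pm a) (\<lambda>s. - a s)" if "inner_vec M a (mat_vec M Pm a) = -1"
  proof -
    have "(\<Sum>s<M. (a s + b s)^2) = 0" using dp that by (simp add: c_def b_def)
    then have "\<forall>s\<in>{..<M}. (a s + b s)^2 = 0" by (subst (asm) sum_nonneg_eq_0_iff) auto
    then have "\<forall>s<M. b s = - a s" by (auto simp: add_eq_0_iff)
    then show ?thesis by (simp add: vec_eq_def b_def)
  qed
  show "inner_vec M a (mat_vec M Pm a) = -1" if "vec_eq M (mat_vec M Pm a) (\<lambda>s. - a s)"
  proof -
    have "c = (\<Sum>s<M. -((a s)^2))" unfolding cd using that
      by (intro sum.cong) (auto simp: vec_eq_def b_def power2_eq_square)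
    then have "c = -1" using na by (simp add: sum_negf)
    then show ?thesis by (simp add: c_def b_def)
  qed
qed




lemma prod_pm1:
  fixes c :: "nat \<Rightarrow> real"
  assumes "finite A" "\<forall>i\<in>A. \<bar>c i\<bar> \<le> 1" "prod c A = 1"
  shows "\<forall>i\<in>A. c i = 1 \<or> c i = -1" and "even (card {i\<in>A. c i = -1})"
proof -
  have pa: "prod (\<lambda>i. \<bar>c i\<bar>) A = 1"
    using assms(3) abs_prod[of c A] by simp
  have one: "\<bar>c i\<bar> = 1" if "i \<in> A" for i
  proof (rule ccontr)
    assume "\<bar>c i\<bar> \<noteq> 1"
    then have lt: "\<bar>c i\<bar> < 1" using assms(2) that by force
    have "prod (\<lambda>i. \<bar>c i\<bar>) A = \<bar>c i\<bar> * prod (\<lambda>i. \<bar>c i\<bar>) (A - {i})"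
      using assms(1) that by (simp add: prod.remove)
    also have "\<dots> \<le> \<bar>c i\<bar> * 1"
      using assms(2) by (intro mult_left_mono prod_le_1) auto
    finally show False using pa lt by simp
  qed
  show pm: "\<forall>i\<in>A. c i = 1 \<or> c i = -1"
  proof
    fix i assume "i \<in> A" then have "\<bar>c i\<bar> = 1" by (rule one)
    then show "c i = 1 \<or> c i = -1" by (cases "c i \<ge> 0") auto
  qed
  have "prod c A = prod (\<lambda>i. if c i = -1 then -1 else 1) A"
    using pm by (intro prod.cong) auto
  also have "\<dots> = (-1) ^ card {i\<in>A. c i = -1}"
  proof -
    have e: "{i\<in>A. c i = -1} = A \<inter> {i. c i = -1}" by blast
    show ?thesis using assms(1) unfolding e by (simp add: prod.If_cases)
  qed
  finally have "(-1::real) ^ card {i\<in>A. c i = -1} = 1" using assms(3) by simp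
  then show "even (card {i\<in>A. c i = -1})"
  proof (rule contrapos_pp)
    assume "odd (card {i\<in>A. c i = -1})"
    then show "(-1::real) ^ card {i\<in>A. c i = -1} \<noteq> 1" by simp
  qed
qed

definition SS :: "(nat \<Rightarrow> nat) \<Rightarrow> nat \<Rightarrow> nat \<Rightarrow> (nat \<Rightarrow> nat \<Rightarrow> nat) \<Rightarrow> nat" where
  "SS m k d x = lin (\<lambda>i. m i ^ k) (\<lambda>i. lin (\<lambda>r. m i) (x i) k) d"
definition TT :: "(nat \<Rightarrow> nat) \<Rightarrow> nat \<Rightarrow> nat \<Rightarrow> (nat \<Rightarrow> nat \<Rightarrow> nat) \<Rightarrow> nat" where
  "TT m k d x = lin (\<lambda>r. \<Prod>i<d. m i) (\<lambda>r. lin m (\<lambda>i. x i r) d) k"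
definition BB :: "(nat \<Rightarrow> nat) \<Rightarrow> nat \<Rightarrow> nat \<Rightarrow> (nat \<Rightarrow> nat \<Rightarrow> nat) \<Rightarrow> bool" where
  "BB m k d x \<longleftrightarrow> (\<forall>i<d. \<forall>r<k. x i r < m i)"

lemma Q_eq: "Qmat k d (\<lambda>i r. m i) s t =
   (if \<exists>x. BB m k d x \<and> s = SS m k d x \<and> t = TT m k d x then 1 else 0)"
  unfolding Qmat_def SS_def TT_def BB_def by (simp only: prod_constant card_lessThan)

lemma inner_bound: "\<forall>r<k. x r < m i \<Longrightarrow> lin (\<lambda>r. m i) x k < m i ^ k"
  using lin_bound[of k x "\<lambda>r. m i"] by simp

lemma SS_bound: "BB m k d x \<Longrightarrow> SS m k d x < (\<Prod>i<d. m i) ^ k"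
proof -
  assume "BB m k d x"
  then have h: "\<forall>i<d. lin (\<lambda>r. m i) (x i) k < m i ^ k" unfolding BB_def by (simp add: inner_bound)
  have "SS m k d x < (\<Prod>i<d. m i ^ k)" unfolding SS_def by (rule lin_bound[OF h])
  then show ?thesis by (simp add: prod_power_distrib)
qed

lemma TT_bound: "BB m k d x \<Longrightarrow> TT m k d x < (\<Prod>i<d. m i) ^ k"
proof -
  assume "BB m k d x"
  then have h: "\<forall>r<k. lin m (\<lambda>i. x i r) d < (\<Prod>i<d. m i)"
    unfolding BB_def by (auto intro: lin_bound)
  have "TT m k d x < (\<Prod>r<k. (\<Prod>i<d. m i))" unfolding TT_def by (rule lin_bound[OF h])
  then show ?thesis by simp
qed

lemma SS_inj: "BB m k d x \<Longrightarrow> BB m k d y \<Longrightarrow> SS m k d x = SS m k d y \<Longrightarrow> \<forall>i<d. \<forall>r<k. x i r = y i r"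
proof -
  assume bx: "BB m k d x" and by': "BB m k d y" and e: "SS m k d x = SS m k d y"
  have h1: "\<forall>i<d. lin (\<lambda>r. m i) (x i) k < m i ^ k" using bx unfolding BB_def by (simp add: inner_bound)
  have h2: "\<forall>i<d. lin (\<lambda>r. m i) (y i) k < m i ^ k" using by' unfolding BB_def by (simp add: inner_bound)
  have h: "\<forall>i<d. lin (\<lambda>r. m i) (x i) k = lin (\<lambda>r. m i) (y i) k"
    using lin_inj[OF h1 h2] e unfolding SS_def by simp
  show ?thesis
  proof (intro allI impI)
    fix i r assume ir: "i < d" "r < k"
    have a1: "\<forall>r<k. x i r < m i" "\<forall>r<k. y i r < m i" using bx by' ir unfolding BB_def by auto
    have "\<forall>r<k. x i r = y i r" using lin_inj[OF a1] h ir by simp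
    then show "x i r = y i r" using ir by simp
  qed
qed

lemma TT_inj: "BB m k d x \<Longrightarrow> BB m k d y \<Longrightarrow> TT m k d x = TT m k d y \<Longrightarrow> \<forall>i<d. \<forall>r<k. x i r = y i r"
proof -
  assume bx: "BB m k d x" and by': "BB m k d y" and e: "TT m k d x = TT m k d y"
  have bxx: "\<forall>r<k. lin m (\<lambda>i. x i r) d < (\<Prod>i<d. m i)" using bx unfolding BB_def by (auto intro: lin_bound)
  have byy: "\<forall>r<k. lin m (\<lambda>i. y i r) d < (\<Prod>i<d. m i)" using by' unfolding BB_def by (auto intro: lin_bound)
  have h: "\<forall>r<k. lin m (\<lambda>i. x i r) d = lin m (\<lambda>i. y i r) d"
    using lin_inj[OF bxx byy] e unfolding TT_def by simp
  show ?thesis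
  proof (intro allI impI)
    fix i r assume ir: "i < d" "r < k"
    have a1: "\<forall>i<d. x i r < m i" "\<forall>i<d. y i r < m i" using bx by' ir unfolding BB_def by auto
    have "\<forall>i<d. x i r = y i r" using lin_inj[OF a1] h ir by simp
    then show "x i r = y i r" using ir by simp
  qed
qed

lemma SS_cong: "\<forall>i<d. \<forall>r<k. x i r = y i r \<Longrightarrow> SS m k d x = SS m k d y"
  unfolding SS_def by (intro lin_cong) simp

lemma TT_cong: "\<forall>i<d. \<forall>r<k. x i r = y i r \<Longrightarrow> TT m k d x = TT m k d y"
  unfolding TT_def by (intro lin_cong) simp

lemma SS_surj: "s < (\<Prod>i<d. m i) ^ k \<Longrightarrow> \<exists>x. BB m k d x \<and> SS m k d x = s"
proof -
  assume "s < (\<Prod>i<d. m i) ^ k"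
  then have "s < (\<Prod>i<d. m i ^ k)" by (simp add: prod_power_distrib)
  then have "\<exists>y. (\<forall>i<d. y i < m i ^ k) \<and> lin (\<lambda>i. m i ^ k) y d = s" by (rule lin_surj)
  then obtain y where y: "\<forall>i<d. y i < m i ^ k" "lin (\<lambda>i. m i ^ k) y d = s" by blast
  have "\<forall>i. \<exists>xi. i < d \<longrightarrow> (\<forall>r<k. xi r < m i) \<and> lin (\<lambda>r. m i) xi k = y i"
  proof
    fix i show "\<exists>xi. i < d \<longrightarrow> (\<forall>r<k. xi r < m i) \<and> lin (\<lambda>r. m i) xi k = y i"
    proof (cases "i < d")
      case True
      then have "y i < (\<Prod>r<k. m i)" using y by simp
      then show ?thesis using lin_surj[of "y i" "\<lambda>r. m i" k] by blast
    qed simp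
  qed
  from choice[OF this] obtain x where x: "\<forall>i. i < d \<longrightarrow> (\<forall>r<k. x i r < m i) \<and> lin (\<lambda>r. m i) (x i) k = y i"
    by blast
  have "BB m k d x" using x unfolding BB_def by blast
  moreover have "SS m k d x = s" unfolding SS_def
    by (subst y(2)[symmetric], intro lin_cong) (use x in auto)
  ultimately show ?thesis by blast
qed




lemma Q_perm:
  "\<exists>\<tau>. (\<forall>s<(\<Prod>i<d. m i) ^ k. \<tau> s < (\<Prod>i<d. m i) ^ k) \<and> inj_on \<tau> {..<(\<Prod>i<d. m i) ^ k} \<and>
     (\<forall>s<(\<Prod>i<d. m i) ^ k. \<forall>t. Qmat k d (\<lambda>i r. m i) s t = (if t = \<tau> s then 1 else 0))"
proof -
  define N where "N = (\<Prod>i<d. m i) ^ k"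
  define x0 where "x0 s = (SOME x. BB m k d x \<and> SS m k d x = s)" for s
  define \<tau> where "\<tau> s = TT m k d (x0 s)" for s
  have x0: "BB m k d (x0 s) \<and> SS m k d (x0 s) = s" if "s < N" for s
  proof -
    have "\<exists>x. BB m k d x \<and> SS m k d x = s" using SS_surj that unfolding N_def by blast
    from someI_ex[OF this] show ?thesis unfolding x0_def .
  qed
  have tb: "\<forall>s<N. \<tau> s < N" unfolding \<tau>_def N_def using x0 TT_bound N_def by blast
  have inj: "inj_on \<tau> {..<N}"
  proof
    fix s s' assume a: "s \<in> {..<N}" "s' \<in> {..<N}" "\<tau> s = \<tau> s'"
    have b: "BB m k d (x0 s)" "BB m k d (x0 s')" "SS m k d (x0 s) = s" "SS m k d (x0 s') = s'"
      using x0 a by auto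
    have "\<forall>i<d. \<forall>r<k. x0 s i r = x0 s' i r" using TT_inj[OF b(1,2)] a(3) unfolding \<tau>_def by simp
    then have "SS m k d (x0 s) = SS m k d (x0 s')" by (rule SS_cong)
    then show "s = s'" using b by simp
  qed
  have q: "Qmat k d (\<lambda>i r. m i) s t = (if t = \<tau> s then 1 else 0)" if "s < N" for s t
  proof (cases "\<exists>x. BB m k d x \<and> s = SS m k d x \<and> t = TT m k d x")
    case True
    then obtain x where x: "BB m k d x" "s = SS m k d x" "t = TT m k d x" by blast
    have "\<forall>i<d. \<forall>r<k. x i r = x0 s i r" using SS_inj[OF x(1)] x0[OF that] x(2) by simp
    then have "t = \<tau> s" unfolding \<tau>_def x(3) by (rule TT_cong)
    then show ?thesis using True by (simp add: Q_eq)
  next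
    case False
    then have "t \<noteq> \<tau> s" using x0[OF that] unfolding \<tau>_def by metis
    then show ?thesis using False by (simp add: Q_eq)
  qed
  show ?thesis using tb inj q unfolding N_def by blast
qed

lemma KQ:
  assumes N_def: "N = (\<Prod>i<d. m i) ^ k"
    and Q_def: "Q = Qmat k d (\<lambda>i r. m i)"
    and A_sym: "vec_eq N (mat_vec N P vA) vA"
    and P_split: "mat_eq N P (mat_mul N (mat_transpose Q) (mat_mul N K Q))"
    and w: "w < N"
  shows "(\<Sum>z<N. K w z * mat_vec N Q vA z) = mat_vec N Q vA w"
proof -
  obtain \<tau> where tb: "\<forall>s<N. \<tau> s < N" and inj: "inj_on \<tau> {..<N}"
    and q: "\<forall>s<N. \<forall>t. Q s t = (if t = \<tau> s then 1 else 0)"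
    using Q_perm[where d=d and m=m and k=k] unfolding N_def[symmetric] Q_def[symmetric] by blast
  have qv: "mat_vec N Q vA s = vA (\<tau> s)" if "s < N" for s
  proof -
    have "mat_vec N Q vA s = (\<Sum>t<N. if t = \<tau> s then vA t else 0)"
      unfolding mat_vec_def using q that by (intro sum.cong) auto
    also have "\<dots> = vA (\<tau> s)" using tb that by simp
    finally show ?thesis .
  qed
  define u where "u = \<tau> w"
  have u: "u < N" using tb w u_def by simp
  have Pu: "P u v = (\<Sum>z<N. K w z * Q z v)" if "v < N" for v
  proof -
    have "P u v = (\<Sum>w'<N. Q w' u * (\<Sum>z<N. K w' z * Q z v))"
      using P_split u that unfolding mat_eq_def mat_mul_def mat_transpose_def by simp
    also have "\<dots> = (\<Sum>w'<N. if w' = w then (\<Sum>z<N. K w' z * Q z v) else 0)"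
    proof (intro sum.cong refl)
      fix w' assume "w' \<in> {..<N}"
      then have "Q w' u = (if w' = w then 1 else 0)" using q inj w unfolding u_def
        by (auto simp: inj_on_def)
      then show "Q w' u * (\<Sum>z<N. K w' z * Q z v) = (if w' = w then (\<Sum>z<N. K w' z * Q z v) else 0)"
        by simp
    qed
    also have "\<dots> = (\<Sum>z<N. K w z * Q z v)" using w by simp
    finally show ?thesis .
  qed
  have "mat_vec N Q vA w = vA u" using qv w u_def by simp
  also have "\<dots> = (\<Sum>v<N. P u v * vA v)" using A_sym u unfolding vec_eq_def mat_vec_def by simp
  also have "\<dots> = (\<Sum>v<N. (\<Sum>z<N. K w z * Q z v) * vA v)" using Pu by simp
  also have "\<dots> = (\<Sum>v<N. \<Sum>z<N. K w z * (Q z v * vA v))" by (simp add: sum_distrib_right mult.assoc)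
  also have "\<dots> = (\<Sum>z<N. \<Sum>v<N. K w z * (Q z v * vA v))" by (rule sum.swap)
  also have "\<dots> = (\<Sum>z<N. K w z * mat_vec N Q vA z)" by (simp add: mat_vec_def sum_distrib_left)
  finally show ?thesis by simp
qed




lemma ps: "(\<Sum>l\<in>PiE {..<d::nat} (\<lambda>i. {..<M i::nat}). \<Prod>i<d. f i (l i)) = (\<Prod>i<d. \<Sum>s<M i. (f i s :: real))"
proof -
  have "(\<Prod>i\<in>{..<d}. \<Sum>s\<in>{..<M i}. f i s) = (\<Sum>l\<in>PiE {..<d} (\<lambda>i. {..<M i}). \<Prod>i\<in>{..<d}. f i (l i))"
    by (rule prod_sum_PiE) auto
  then show ?thesis by simp
qed

lemma ps2: "(\<Sum>l\<in>PiE {..<d::nat} (\<lambda>i. {..<M i::nat}). \<Sum>l'\<in>PiE {..<d} (\<lambda>i. {..<M i}). \<Prod>i<d. f i (l i) (l' i))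
   = (\<Prod>i<d. \<Sum>s<M i. \<Sum>s'<M i. (f i s s' :: real))"
proof -
  have "(\<Sum>l'\<in>PiE {..<d} (\<lambda>i. {..<M i}). \<Prod>i<d. f i (l i) (l' i)) = (\<Prod>i<d. \<Sum>s'<M i. f i (l i) s')" for l
    by (rule ps)
  then have "(\<Sum>l\<in>PiE {..<d} (\<lambda>i. {..<M i}). \<Sum>l'\<in>PiE {..<d} (\<lambda>i. {..<M i}). \<Prod>i<d. f i (l i) (l' i))
     = (\<Sum>l\<in>PiE {..<d} (\<lambda>i. {..<M i}). \<Prod>i<d. \<Sum>s'<M i. f i (l i) s')" by simp
  also have "\<dots> = (\<Prod>i<d. \<Sum>s<M i. \<Sum>s'<M i. f i s s')" by (rule ps)
  finally show ?thesis .
qed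

lemma inner_mat: "inner_vec M x (mat_vec M P y) = (\<Sum>s<M. \<Sum>t<M. x s * P s t * y t)"
  unfolding inner_vec_def mat_vec_def by (simp add: sum_distrib_left mult.assoc)




theorem theorem2:
  fixes k n d R :: nat
    and vA :: rvec
    and P :: rmat
    and m :: "nat \<Rightarrow> nat"
    and Ps :: "nat \<Rightarrow> rmat"
    and \<sigma> :: "nat \<Rightarrow> real"
    and a :: "nat \<Rightarrow> nat \<Rightarrow> rvec"
  assumes P_perm: "perm_mat (n ^ k) P"
    and P_gen: "general_symmetry k n P"
    and A_sym: "vec_eq (n ^ k) (mat_vec (n ^ k) P vA) vA"
    and m_prod: "(\<Prod>i<d. m i) = n"
    and Ps_perm: "\<forall>i<d. perm_mat (m i ^ k) (Ps i)"
    and P_split: "mat_eq (n ^ k) P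
            (mat_mul (n ^ k) (mat_transpose (Qmat k d (\<lambda>i r. m i)))
               (mat_mul (n ^ k) (kron_list (\<lambda>i. m i ^ k) Ps d) (Qmat k d (\<lambda>i r. m i))))"
    and decomp: "\<forall>l \<in> (\<Pi>\<^sub>E i\<in>{..<d}. {..<m i ^ k}).
            mat_vec (n ^ k) (Qmat k d (\<lambda>i r. m i)) vA (lin (\<lambda>i. m i ^ k) l d)
              = (\<Sum>j<R. \<sigma> j * (\<Prod>i<d. a i j (l i)))"
    and sigma_nz: "\<forall>j<R. \<sigma> j \<noteq> 0"
    and unit: "\<forall>i<d. \<forall>j<R. inner_vec (m i ^ k) (a i j) (a i j) = 1"
    and orth: "\<forall>j<R. \<forall>j'<R. j \<noteq> j' \<longrightarrow>
            (\<Sum>l \<in> (\<Pi>\<^sub>E i\<in>{..<d}. {..<m i ^ k}).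
               (\<sigma> j * (\<Prod>i<d. a i j (l i))) * (\<sigma> j' * (\<Prod>i<d. a i j' (l i)))) = 0"
    and cond1_distinct: "inj_on \<sigma> {..<R}"
    and cond1: "\<forall>l<R. \<forall>j<R. j \<noteq> l \<longrightarrow>
            \<sigma> j * (\<Prod>i<d. inner_vec (m i ^ k) (a i l) (mat_vec (m i ^ k) (Ps i) (a i j))) = 0"
  shows "\<forall>j<R.
           (\<forall>i<d. vec_eq (m i ^ k) (mat_vec (m i ^ k) (Ps i) (a i j)) (a i j) \<or>
                  vec_eq (m i ^ k) (mat_vec (m i ^ k) (Ps i) (a i j)) (\<lambda>s. - a i j s)) \<and>
           (card {i. i < d \<and> vec_eq (m i ^ k) (mat_vec (m i ^ k) (Ps i) (a i j)) (\<lambda>s. - a i j s)} = 0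
            \<or> even (card {i. i < d \<and> vec_eq (m i ^ k) (mat_vec (m i ^ k) (Ps i) (a i j)) (\<lambda>s. - a i j s)}))"
proof -
  define N where "N = n ^ k"
  define I where "I = PiE {..<d} (\<lambda>i. {..<m i ^ k})"
  define \<phi> where "\<phi> l = lin (\<lambda>i. m i ^ k) l d" for l
  define K where "K = kron_list (\<lambda>i. m i ^ k) Ps d"
  define Q where "Q = Qmat k d (\<lambda>i r. m i)"
  define q where "q = mat_vec N Q vA"
  define T where "T j l = (\<Prod>i<d. a i j (l i))" for j l
  define av where "av l = (\<Sum>j<R. \<sigma> j * T j l)" for l
  define Kp where "Kp l l' = (\<Prod>i<d. Ps i (l i) (l' i))" for l l' :: "nat \<Rightarrow> nat"
  have N: "N = (\<Prod>i<d. m i) ^ k" using m_prod N_def by simp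
  have NI: "N = (\<Prod>i<d. m i ^ k)" by (simp add: N prod_power_distrib)
  have KQ: "(\<Sum>z<N. K w z * q z) = q w" if "w < N" for w
    unfolding q_def
    by (rule KQ[OF N Q_def A_sym[folded N_def] P_split[folded N_def K_def Q_def] that])
  have dec: "q (\<phi> l) = av l" if "l \<in> I" for l
    using decomp that unfolding q_def Q_def N_def \<phi>_def I_def av_def T_def by simp
  have Ib: "\<forall>i<d. l i < m i ^ k" if "l \<in> I" for l using that unfolding I_def by auto
  have bij: "bij_betw \<phi> I {..<N}"
  proof (rule bij_betwI')
    fix l l' assume a: "l \<in> I" "l' \<in> I"
    show "(\<phi> l = \<phi> l') = (l = l')"
    proof
      assume "\<phi> l = \<phi> l'"
      then have "\<forall>i<d. l i = l' i" using lin_inj[OF Ib[OF a(1)] Ib[OF a(2)]] unfolding \<phi>_def by simp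
      then show "l = l'" using a unfolding I_def by (intro PiE_ext[of l "{..<d}"]) auto
    qed simp
  next
    fix l assume "l \<in> I"
    then show "\<phi> l \<in> {..<N}" using lin_bound[OF Ib] unfolding \<phi>_def NI by simp
  next
    fix z assume "z \<in> {..<N}"
    then have "z < (\<Prod>i<d. m i ^ k)" using NI by simp
    then have "\<exists>dig. (\<forall>t<d. dig t < m t ^ k) \<and> lin (\<lambda>i. m i ^ k) dig d = z" by (rule lin_surj)
    then obtain dig where dg: "\<forall>t<d. dig t < m t ^ k" "lin (\<lambda>i. m i ^ k) dig d = z" by blast
    have "restrict dig {..<d} \<in> I" using dg unfolding I_def by auto
    moreover have "\<phi> (restrict dig {..<d}) = z" unfolding \<phi>_def
      by (subst dg(2)[symmetric], rule lin_cong) simp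
    ultimately show "\<exists>l\<in>I. z = \<phi> l" by metis
  qed
  have Kphi: "K (\<phi> l) (\<phi> l') = Kp l l'" if "l \<in> I" "l' \<in> I" for l l'
    unfolding K_def \<phi>_def Kp_def by (rule kron_list_lin[OF Ib[OF that(1)] Ib[OF that(2)]])
  have fixp: "(\<Sum>l'\<in>I. Kp l l' * av l') = av l" if "l \<in> I" for l
  proof -
    have "\<phi> l < N" using bij that by (auto simp: bij_betw_def)
    have "(\<Sum>l'\<in>I. Kp l l' * av l') = (\<Sum>l'\<in>I. K (\<phi> l) (\<phi> l') * q (\<phi> l'))"
      using Kphi dec that by (intro sum.cong) auto
    also have "\<dots> = (\<Sum>z<N. K (\<phi> l) z * q z)"
      by (rule sum.reindex_bij_betw[OF bij, of "\<lambda>z. K (\<phi> l) z * q z"])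
    also have "\<dots> = q (\<phi> l)" by (rule KQ) fact
    also have "\<dots> = av l" by (rule dec) fact
    finally show ?thesis .
  qed
  show ?thesis
  proof (intro allI impI)
    fix j0 assume j0: "j0 < R"
    define c where "c i = inner_vec (m i ^ k) (a i j0) (mat_vec (m i ^ k) (Ps i) (a i j0))" for i
    have G: "(\<Sum>l\<in>I. T j0 l * T j l) = (\<Prod>i<d. inner_vec (m i ^ k) (a i j0) (a i j))" for j
    proof -
      have "(\<Sum>l\<in>I. T j0 l * T j l) = (\<Sum>l\<in>I. \<Prod>i<d. a i j0 (l i) * a i j (l i))"
        unfolding T_def by (simp add: prod.distrib)
      also have "\<dots> = (\<Prod>i<d. \<Sum>s<m i ^ k. a i j0 s * a i j s)" unfolding I_def by (rule ps)
      finally show ?thesis by (simp add: inner_vec_def)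
    qed
    have H: "(\<Sum>l\<in>I. \<Sum>l'\<in>I. T j0 l * Kp l l' * T j l') =
        (\<Prod>i<d. inner_vec (m i ^ k) (a i j0) (mat_vec (m i ^ k) (Ps i) (a i j)))" for j
    proof -
      have "(\<Sum>l\<in>I. \<Sum>l'\<in>I. T j0 l * Kp l l' * T j l') =
          (\<Sum>l\<in>I. \<Sum>l'\<in>I. \<Prod>i<d. a i j0 (l i) * Ps i (l i) (l' i) * a i j (l' i))"
        unfolding T_def Kp_def by (simp add: prod.distrib)
      also have "\<dots> = (\<Prod>i<d. \<Sum>s<m i ^ k. \<Sum>s'<m i ^ k. a i j0 s * Ps i s s' * a i j s')"
        unfolding I_def by (rule ps2)
      finally show ?thesis by (simp add: inner_mat)
    qed
    have E1: "(\<Sum>l\<in>I. T j0 l * av l) = \<sigma> j0"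
    proof -
      have "(\<Sum>l\<in>I. T j0 l * av l) = (\<Sum>l\<in>I. \<Sum>j<R. \<sigma> j * (T j0 l * T j l))"
        unfolding av_def by (simp add: sum_distrib_left mult.left_commute)
      also have "\<dots> = (\<Sum>j<R. \<sigma> j * (\<Sum>l\<in>I. T j0 l * T j l))"
        by (subst sum.swap) (simp add: sum_distrib_left)
      also have "\<dots> = (\<Sum>j<R. if j = j0 then \<sigma> j0 else 0)"
      proof (intro sum.cong refl)
        fix j assume j: "j \<in> {..<R}"
        show "\<sigma> j * (\<Sum>l\<in>I. T j0 l * T j l) = (if j = j0 then \<sigma> j0 else 0)"
        proof (cases "j = j0")
          case True
          then show ?thesis using G[of j0] unit j0 by simp
        next
          case False
          have "(\<Sum>l\<in>I. (\<sigma> j0 * T j0 l) * (\<sigma> j * T j l)) = 0"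
            using orth j0 j False unfolding I_def T_def by auto
          then have "\<sigma> j0 * (\<sigma> j * (\<Sum>l\<in>I. T j0 l * T j l)) = 0"
            by (simp add: sum_distrib_left mult_ac)
          then show ?thesis using sigma_nz j0 False by simp
        qed
      qed
      also have "\<dots> = \<sigma> j0" using j0 by simp
      finally show ?thesis .
    qed
    have E2: "(\<Sum>l\<in>I. T j0 l * av l) = \<sigma> j0 * (\<Prod>i<d. c i)"
    proof -
      have "(\<Sum>l\<in>I. T j0 l * av l) = (\<Sum>l\<in>I. T j0 l * (\<Sum>l'\<in>I. Kp l l' * av l'))"
        using fixp by simp
      also have "\<dots> = (\<Sum>l\<in>I. \<Sum>l'\<in>I. \<Sum>j<R. \<sigma> j * (T j0 l * Kp l l' * T j l'))"
        unfolding av_def by (simp add: sum_distrib_left mult_ac)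
      also have "\<dots> = (\<Sum>j<R. \<sigma> j * (\<Sum>l\<in>I. \<Sum>l'\<in>I. T j0 l * Kp l l' * T j l'))"
        by (simp add: sum.swap[of _ "{..<R}"] sum_distrib_left)
      also have "\<dots> = (\<Sum>j<R. if j = j0 then \<sigma> j0 * (\<Prod>i<d. c i) else 0)"
      proof (intro sum.cong refl)
        fix j assume j: "j \<in> {..<R}"
        show "\<sigma> j * (\<Sum>l\<in>I. \<Sum>l'\<in>I. T j0 l * Kp l l' * T j l') = (if j = j0 then \<sigma> j0 * (\<Prod>i<d. c i) else 0)"
          using cond1 j j0 unfolding H c_def by auto
      qed
      also have "\<dots> = \<sigma> j0 * (\<Prod>i<d. c i)" using j0 by simp
      finally show ?thesis .
    qed
    have pc: "(\<Prod>i<d. c i) = 1" using E1 E2 sigma_nz j0 by simp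
    have un: "inner_vec (m i ^ k) (a i j0) (a i j0) = 1" if "i < d" for i using unit that j0 by simp
    have cb: "\<forall>i\<in>{..<d}. \<bar>c i\<bar> \<le> 1" unfolding c_def using unit_perm(1)[OF _ un] Ps_perm by simp
    have pm: "\<forall>i\<in>{..<d}. c i = 1 \<or> c i = -1" and ev: "even (card {i\<in>{..<d}. c i = -1})"
      using prod_pm1[OF _ cb pc] by simp_all
    show "(\<forall>i<d. vec_eq (m i ^ k) (mat_vec (m i ^ k) (Ps i) (a i j0)) (a i j0) \<or>
                  vec_eq (m i ^ k) (mat_vec (m i ^ k) (Ps i) (a i j0)) (\<lambda>s. - a i j0 s)) \<and>
           (card {i. i < d \<and> vec_eq (m i ^ k) (mat_vec (m i ^ k) (Ps i) (a i j0)) (\<lambda>s. - a i j0 s)} = 0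
            \<or> even (card {i. i < d \<and> vec_eq (m i ^ k) (mat_vec (m i ^ k) (Ps i) (a i j0)) (\<lambda>s. - a i j0 s)}))"
    proof
      show "\<forall>i<d. vec_eq (m i ^ k) (mat_vec (m i ^ k) (Ps i) (a i j0)) (a i j0) \<or>
                  vec_eq (m i ^ k) (mat_vec (m i ^ k) (Ps i) (a i j0)) (\<lambda>s. - a i j0 s)"
      proof (intro allI impI)
        fix i assume i: "i < d"
        show "vec_eq (m i ^ k) (mat_vec (m i ^ k) (Ps i) (a i j0)) (a i j0) \<or>
                  vec_eq (m i ^ k) (mat_vec (m i ^ k) (Ps i) (a i j0)) (\<lambda>s. - a i j0 s)"
          using pm i unit_perm(2,3)[OF _ un[OF i]] Ps_perm unfolding c_def by auto
      qed
      have "{i. i < d \<and> vec_eq (m i ^ k) (mat_vec (m i ^ k) (Ps i) (a i j0)) (\<lambda>s. - a i j0 s)}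
            = {i\<in>{..<d}. c i = -1}"
        using unit_perm(3,4)[OF _ un] Ps_perm unfolding c_def by auto
      then show "card {i. i < d \<and> vec_eq (m i ^ k) (mat_vec (m i ^ k) (Ps i) (a i j0)) (\<lambda>s. - a i j0 s)} = 0
            \<or> even (card {i. i < d \<and> vec_eq (m i ^ k) (mat_vec (m i ^ k) (Ps i) (a i j0)) (\<lambda>s. - a i j0 s)})"
        using ev by simp
    qed
  qed
qed


end
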